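(* Let $r \ge 2$, $t \ge 2$ and $k \ge 1$ be integers with $k \ge t-3$. Let $G$ be a graph on $n$ vertices, where $$(r-1)(t-1)k < n \le (r-1)(t-1)(k+1),$$ and suppose $$\delta(G) \ge n - \left\lceil \frac{k}{k+1}\left\lceil \frac{n}{r-1}\right\rceil \right\rceil.$$ Then $G \rightarrow (K_r, P_t)$; that is, for every colouring of the edges of $G$ with the two colours red and blue, there is either a red copy of $K_r$ (a complete graph on $r$ vertices all of whose edges are red) or a blue copy of $P_t$ (a path on $t$ vertices all of whose edges are blue).
   Context: $\delta(G)$ denotes the minimum degree of $G$. $K_r$ is the complete graph on $r$ vertices and $P_t$ is the path on $t$ vertices. The notation $G \rightarrow (K_r,P_t)$ means every red/blue edge-colouring of $G$ contains a red $K_r$ or a blue $P_t$ as a subgraph. *)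

theory Defs
  imports Complex_Main
begin

definition simple_graph :: "'a set \<Rightarrow> 'a set set \<Rightarrow> bool" where
  "simple_graph V E \<longleftrightarrow> finite V \<and> (\<forall>e\<in>E. e \<subseteq> V \<and> card e = 2)"

definition degree :: "'a set set \<Rightarrow> 'a \<Rightarrow> nat" where
  "degree E v = card {u. {v, u} \<in> E}"

text \<open>Minimum degree delta(G) (V assumed finite and nonempty).\<close>
definition min_degree :: "'a set \<Rightarrow> 'a set set \<Rightarrow> nat" where
  "min_degree V E = Min (degree E ` V)"

text \<open>A red/blue edge colouring is a function c : E -> bool; c e = True means e is red.
  Red copy of K_r: r vertices, all pairs among them are edges coloured red.\<close>
definition has_red_clique :: "'a set \<Rightarrow> 'a set set \<Rightarrow> ('a set \<Rightarrow> bool) \<Rightarrow> nat \<Rightarrow> bool" where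
  "has_red_clique V E c r \<longleftrightarrow>
     (\<exists>S\<subseteq>V. card S = r \<and> (\<forall>x\<in>S. \<forall>y\<in>S. x \<noteq> y \<longrightarrow> {x, y} \<in> E \<and> c {x, y}))"

definition has_blue_path :: "'a set \<Rightarrow> 'a set set \<Rightarrow> ('a set \<Rightarrow> bool) \<Rightarrow> nat \<Rightarrow> bool" where
  "has_blue_path V E c t \<longleftrightarrow>
     (\<exists>ps. length ps = t \<and> distinct ps \<and> set ps \<subseteq> V \<and>
        (\<forall>i. Suc i < t \<longrightarrow> {ps ! i, ps ! Suc i} \<in> E \<and> \<not> c {ps ! i, ps ! Suc i}))"

definition arrows :: "'a set \<Rightarrow> 'a set set \<Rightarrow> nat \<Rightarrow> nat \<Rightarrow> bool" where
  "arrows V E r t \<longleftrightarrow>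
     (\<forall>c :: 'a set \<Rightarrow> bool. has_red_clique V E c r \<or> has_blue_path V E c t)"

end

theory Submission
  imports Defs
begin

definition nbrs :: "('a \<Rightarrow> 'a \<Rightarrow> bool) \<Rightarrow> 'a set \<Rightarrow> 'a \<Rightarrow> 'a set" where
  "nbrs adj S v = {u\<in>S. adj v u}"

definition symirr :: "('a \<Rightarrow> 'a \<Rightarrow> bool) \<Rightarrow> bool" where
  "symirr adj \<longleftrightarrow> (\<forall>u v. adj u v \<longrightarrow> adj v u) \<and> (\<forall>u. \<not> adj u u)"

definition pcol :: "('a \<Rightarrow> 'a \<Rightarrow> bool) \<Rightarrow> 'a set \<Rightarrow> ('a \<Rightarrow> nat) \<Rightarrow> bool" where
  "pcol adj S f \<longleftrightarrow> (\<forall>u\<in>S. \<forall>v\<in>S. adj u v \<longrightarrow> f u \<noteq> f v)"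

definition colourable :: "('a \<Rightarrow> 'a \<Rightarrow> bool) \<Rightarrow> 'a set \<Rightarrow> nat \<Rightarrow> bool" where
  "colourable adj S D \<longleftrightarrow> (\<exists>f. (\<forall>v\<in>S. f v < D) \<and> pcol adj S f)"

definition clq :: "('a \<Rightarrow> 'a \<Rightarrow> bool) \<Rightarrow> 'a set \<Rightarrow> bool" where
  "clq adj X \<longleftrightarrow> (\<forall>u\<in>X. \<forall>v\<in>X. u \<noteq> v \<longrightarrow> adj u v)"

lemma symirr_sym: "symirr adj \<Longrightarrow> adj u v \<longleftrightarrow> adj v u"
  unfolding symirr_def by blast

lemma symirr_irr: "symirr adj \<Longrightarrow> \<not> adj u u"
  unfolding symirr_def by blast

lemma nbrs_mono: "S \<subseteq> T \<Longrightarrow> nbrs adj S v \<subseteq> nbrs adj T v"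
  unfolding nbrs_def by auto

lemma finite_nbrs: "finite S \<Longrightarrow> finite (nbrs adj S v)"
  unfolding nbrs_def by auto

lemma pcol_subset: "pcol adj T f \<Longrightarrow> S \<subseteq> T \<Longrightarrow> pcol adj S f"
  unfolding pcol_def by blast

lemma pcol_mono_adj: "pcol adj' S f \<Longrightarrow> (\<And>u v. adj u v \<Longrightarrow> adj' u v) \<Longrightarrow> pcol adj S f"
  unfolding pcol_def by blast

lemma pcol_inj: "pcol adj S f \<Longrightarrow> inj \<sigma> \<Longrightarrow> pcol adj S (\<sigma> \<circ> f)"
  unfolding pcol_def inj_def by auto

lemma extend_one:
  assumes fin: "finite W" and si: "symirr adj" and w: "w \<in> W"
    and f: "pcol adj (W - {w}) f"
    and lt: "card (nbrs adj W w) < card L"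
  shows "\<exists>c\<in>L. pcol adj W (f(w := c))"
proof -
  let ?U = "f ` nbrs adj W w"
  have "card ?U \<le> card (nbrs adj W w)" using fin by (simp add: card_image_le finite_nbrs)
  hence cu: "card ?U < card L" using lt by simp
  have "finite L" using lt card.infinite by fastforce
  have "\<not> L \<subseteq> ?U"
  proof
    assume "L \<subseteq> ?U"
    hence "card L \<le> card ?U" using fin by (simp add: card_mono finite_nbrs)
    thus False using cu by simp
  qed
  then obtain c where c: "c \<in> L" "c \<notin> ?U" by blast
  have "pcol adj W (f(w := c))"
    unfolding pcol_def
  proof (intro ballI impI)
    fix u v assume u: "u \<in> W" and v: "v \<in> W" and a: "adj u v"
    have nz: "u \<noteq> v" using a si unfolding symirr_def by auto
    show "(f(w := c)) u \<noteq> (f(w := c)) v"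
    proof (cases "u = w")
      case True
      hence "v \<in> nbrs adj W w" using v a unfolding nbrs_def by auto
      thus ?thesis using True nz c by force
    next
      case False note uw = this
      show ?thesis
      proof (cases "v = w")
        case True
        hence "u \<in> nbrs adj W w" using u a si unfolding nbrs_def symirr_def by auto
        thus ?thesis using True uw c by force
      next
        case False
        thus ?thesis using uw f u v a unfolding pcol_def by auto
      qed
    qed
  qed
  thus ?thesis using c by blast
qed

lemma list_engine:
  assumes "finite W" and si: "symirr adj"
    and "\<forall>S\<subseteq>W. S \<noteq> {} \<longrightarrow> (\<exists>w\<in>S. card (nbrs adj S w) < card (L w))"
  shows "\<exists>f. (\<forall>w\<in>W. f w \<in> L w) \<and> pcol adj W f"
  using assms(1,3)
proof (induction "card W" arbitrary: W rule: less_induct)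
  case less
  show ?case
  proof (cases "W = {}")
    case True thus ?thesis unfolding pcol_def by auto
  next
    case False
    then obtain w where w: "w \<in> W" "card (nbrs adj W w) < card (L w)" using less.prems by blast
    have "card (W - {w}) < card W" using w less.prems by (meson card_Diff1_less)
    moreover have "\<forall>S\<subseteq>W - {w}. S \<noteq> {} \<longrightarrow> (\<exists>w\<in>S. card (nbrs adj S w) < card (L w))"
      using less.prems by blast
    ultimately obtain f where f: "\<forall>v\<in>W - {w}. f v \<in> L v" "pcol adj (W - {w}) f"
      using less.hyps[of "W - {w}"] less.prems by auto
    obtain c where c: "c \<in> L w" "pcol adj W (f(w := c))"
      using extend_one[OF less.prems(1) si w(1) f(2) w(2)] by blast
    show ?thesis using f c by (intro exI[of _ "f(w := c)"]) auto
  qed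
qed

definition sw :: "nat \<Rightarrow> nat \<Rightarrow> nat \<Rightarrow> nat" where
  "sw a b x = (if x = a then b else if x = b then a else x)"

lemma sw_inj: "inj (sw a b)"
  unfolding inj_def sw_def by auto

lemma sw_lt: "a < D \<Longrightarrow> b < D \<Longrightarrow> x < D \<Longrightarrow> sw a b x < D"
  unfolding sw_def by auto

lemma two_perm:
  fixes a1 b1 a2 b2 D :: nat
  assumes "a1 \<noteq> b1" "a2 \<noteq> b2"
  shows "\<exists>\<sigma>. inj \<sigma> \<and> \<sigma> a1 = a2 \<and> \<sigma> b1 = b2 \<and> (\<forall>x. x < D \<longrightarrow> a1 < D \<longrightarrow> b1 < D \<longrightarrow> a2 < D \<longrightarrow> b2 < D \<longrightarrow> \<sigma> x < D)"
proof -
  let ?t1 = "sw a1 a2"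
  let ?t2 = "sw (?t1 b1) b2"
  have "inj (?t2 \<circ> ?t1)" using sw_inj inj_compose by blast
  moreover have "?t1 a1 = a2" unfolding sw_def by simp
  moreover have "?t1 b1 \<noteq> a2" using assms unfolding sw_def by auto
  ultimately have "(?t2 \<circ> ?t1) a1 = a2" using assms unfolding sw_def by auto
  moreover have "(?t2 \<circ> ?t1) b1 = b2" unfolding sw_def by auto
  moreover have "\<forall>x. x < D \<longrightarrow> a1 < D \<longrightarrow> b1 < D \<longrightarrow> a2 < D \<longrightarrow> b2 < D \<longrightarrow> (?t2 \<circ> ?t1) x < D"
    by (auto intro!: sw_lt)
  ultimately show ?thesis using \<open>inj (?t2 \<circ> ?t1)\<close> by blast
qed

lemma combine:
  assumes "pcol adj A f1" "pcol adj B f2" "\<forall>v\<in>A \<inter> B. f1 v = f2 v"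
    and "\<forall>u\<in>A - B. \<forall>v\<in>B - A. \<not> adj u v \<and> \<not> adj v u"
  shows "pcol adj (A \<union> B) (\<lambda>v. if v \<in> A then f1 v else f2 v)"
  using assms unfolding pcol_def by (metis DiffI IntI UnE)

lemma glue:
  assumes "pcol adj A f1" "pcol adj B f2" "inj \<sigma>"
    and "\<forall>v\<in>A. f1 v < D" "\<forall>v\<in>B. f2 v < D" "\<forall>c<D. \<sigma> c < D"
    and "\<forall>v\<in>A \<inter> B. \<sigma> (f1 v) = f2 v"
    and "\<forall>u\<in>A - B. \<forall>v\<in>B - A. \<not> adj u v \<and> \<not> adj v u"
  shows "colourable adj (A \<union> B) D"
proof -
  have p1: "pcol adj A (\<sigma> \<circ> f1)" using assms pcol_inj by blast
  have "pcol adj (A \<union> B) (\<lambda>v. if v \<in> A then (\<sigma> \<circ> f1) v else f2 v)"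
    by (rule combine[OF p1 assms(2)]) (use assms in auto)
  moreover have "\<forall>v\<in>A \<union> B. (\<lambda>v. if v \<in> A then (\<sigma> \<circ> f1) v else f2 v) v < D"
    using assms by auto
  ultimately show ?thesis unfolding colourable_def by (intro exI[of _ "\<lambda>v. if v \<in> A then (\<sigma> \<circ> f1) v else f2 v"]) simp
qed

definition cadj :: "('a \<Rightarrow> 'a \<Rightarrow> bool) \<Rightarrow> 'a \<Rightarrow> 'a \<Rightarrow> 'a \<Rightarrow> 'a \<Rightarrow> bool" where
  "cadj adj x y = (\<lambda>u v. adj u v \<or> (u = x \<and> adj y v) \<or> (v = x \<and> adj y u))"

lemma cadj_symirr: "symirr adj \<Longrightarrow> \<not> adj x y \<Longrightarrow> symirr (cadj adj x y)"
  unfolding symirr_def cadj_def by metis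

lemma cadj_pcol:
  assumes "pcol (cadj adj x y) (insert x S) f" "\<not> adj x y" "symirr adj" "y \<notin> S" "x \<noteq> y"
  shows "pcol adj (insert x (insert y S)) (f(y := f x))"
  unfolding pcol_def
proof (intro ballI impI)
  fix u v assume u: "u \<in> insert x (insert y S)" and v: "v \<in> insert x (insert y S)" and a: "adj u v"
  have s: "adj v u" using a assms(3) unfolding symirr_def by blast
  have nz: "u \<noteq> v" using a assms(3) unfolding symirr_def by auto
  show "(f(y := f x)) u \<noteq> (f(y := f x)) v"
  proof (cases "u = y")
    case True
    hence "v \<noteq> x" using a assms(2) symirr_sym[OF assms(3), of x y] by auto
    hence "v \<in> S" using v nz True by auto
    moreover have "cadj adj x y x v" using a True unfolding cadj_def by auto
    ultimately show ?thesis using assms(1) True nz assms(5) unfolding pcol_def by auto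
  next
    case False note uy = this
    show ?thesis
    proof (cases "v = y")
      case True
      hence "u \<noteq> x" using s assms(2) symirr_sym[OF assms(3), of x y] by auto
      hence "u \<in> S" using u nz True by auto
      moreover have "cadj adj x y u x" using s True unfolding cadj_def by auto
      ultimately show ?thesis using assms(1) True nz assms(5) unfolding pcol_def by auto
    next
      case False
      have "cadj adj x y u v" using a unfolding cadj_def by auto
      thus ?thesis using assms(1) u v uy False unfolding pcol_def by auto
    qed
  qed
qed

lemma cadj_deg:
  assumes fin: "finite W" and si: "symirr adj" and v: "v \<in> S" and S: "S \<subseteq> W - {x, y}" and xy: "x \<in> W" "y \<in> W"
  shows "card (nbrs (cadj adj x y) (insert x S) v) \<le> card (nbrs adj W v)"
proof -
  have vx: "v \<noteq> x" "v \<noteq> y" using v S by auto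
  have e: "nbrs (cadj adj x y) (insert x S) v = nbrs adj S v \<union> (if adj v x \<or> adj v y then {x} else {})"
  proof (rule set_eqI)
    fix u
    have yv: "adj y v \<longleftrightarrow> adj v y" using symirr_sym[OF si] by blast
    have xS: "x \<notin> S" using S by blast
    show "u \<in> nbrs (cadj adj x y) (insert x S) v \<longleftrightarrow> u \<in> nbrs adj S v \<union> (if adj v x \<or> adj v y then {x} else {})"
    proof (cases "u = x")
      case True thus ?thesis using yv xS vx by (simp add: nbrs_def cadj_def)
    next
      case False thus ?thesis using vx by (simp add: nbrs_def cadj_def)
    qed
  qed
  have fw: "finite (nbrs adj W v)" by (rule finite_nbrs[OF fin])
  show ?thesis
  proof (cases "adj v x")
    case True
    have "insert x (nbrs adj S v) \<subseteq> nbrs adj W v" using True S xy unfolding nbrs_def by auto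
    thus ?thesis using e True fw by (simp add: card_mono)
  next
    case False note nx = this
    show ?thesis
    proof (cases "adj v y")
      case True
      have sub: "insert y (nbrs adj S v) \<subseteq> nbrs adj W v" using True S xy unfolding nbrs_def by auto
      have fs: "finite (nbrs adj S v)" using fin S by (meson Diff_subset finite_nbrs finite_subset)
      have "x \<notin> nbrs adj S v" "y \<notin> nbrs adj S v" using S unfolding nbrs_def by auto
      hence "card (insert x (nbrs adj S v)) = card (insert y (nbrs adj S v))" using fs by simp
      also have "\<dots> \<le> card (nbrs adj W v)" using sub fw card_mono by blast
      finally show ?thesis using e True nx by simp
    next
      case False
      have "nbrs adj S v \<subseteq> nbrs adj W v" using S by (intro nbrs_mono) auto
      thus ?thesis using e False nx fw by (simp add: card_mono)
    qed
  qed
qed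

lemma cadj_x:
  assumes "symirr adj" "x \<notin> S" "\<not> adj x y"
  shows "nbrs (cadj adj x y) (insert x S) x = nbrs adj S x \<union> nbrs adj S y"
  using assms symirr_irr[OF assms(1), of x] symirr_sym[OF assms(1), of y x] unfolding nbrs_def cadj_def by auto

lemma cadj_noclique:
  assumes fin: "finite S" and ncl: "\<not> (\<exists>X\<subseteq>W. card X = Suc D \<and> clq adj X)" and S: "S \<subseteq> W" "x \<notin> S"
    and lt: "card (nbrs (cadj adj x y) (insert x S) x) < D"
  shows "\<not> (\<exists>X\<subseteq>insert x S. card X = Suc D \<and> clq (cadj adj x y) X)"
proof
  assume "\<exists>X\<subseteq>insert x S. card X = Suc D \<and> clq (cadj adj x y) X"
  then obtain X where X: "X \<subseteq> insert x S" "card X = Suc D" "clq (cadj adj x y) X" by blast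
  show False
  proof (cases "x \<in> X")
    case True
    have "X - {x} \<subseteq> nbrs (cadj adj x y) (insert x S) x"
      using X True unfolding clq_def nbrs_def by auto
    hence "card (X - {x}) \<le> card (nbrs (cadj adj x y) (insert x S) x)"
      using fin by (intro card_mono) (auto simp: finite_nbrs)
    moreover have "card (X - {x}) = D" using X True by simp
    ultimately show False using lt by simp
  next
    case False
    hence "X \<subseteq> W" using X S by auto
    moreover have "clq adj X" unfolding clq_def
    proof (intro ballI impI)
      fix u v assume "u \<in> X" "v \<in> X" "u \<noteq> v"
      hence "cadj adj x y u v" "u \<noteq> x" "v \<noteq> x" using X False unfolding clq_def by auto
      thus "adj u v" unfolding cadj_def by auto
    qed
    ultimately show False using ncl X by blast
  qed
qed

lemma noclq_subset: "\<not> (\<exists>X\<subseteq>W. card X = Suc D \<and> clq adj X) \<Longrightarrow> W' \<subseteq> W \<Longrightarrow> \<not> (\<exists>X\<subseteq>W'. card X = Suc D \<and> clq adj X)"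
  using subset_trans[of _ W' W] by metis

lemma deg_subset: "finite W \<Longrightarrow> \<forall>v\<in>W. card (nbrs adj W v) \<le> D \<Longrightarrow> W' \<subseteq> W \<Longrightarrow> \<forall>v\<in>W'. card (nbrs adj W' v) \<le> D"
proof
  fix v assume "finite W" "\<forall>v\<in>W. card (nbrs adj W v) \<le> D" "W' \<subseteq> W" "v \<in> W'"
  hence "card (nbrs adj W' v) \<le> card (nbrs adj W v)" by (intro card_mono finite_nbrs nbrs_mono)
  thus "card (nbrs adj W' v) \<le> D" using \<open>\<forall>v\<in>W. card (nbrs adj W v) \<le> D\<close> \<open>W' \<subseteq> W\<close> \<open>v \<in> W'\<close> by force
qed

definition adde :: "('a \<Rightarrow> 'a \<Rightarrow> bool) \<Rightarrow> 'a \<Rightarrow> 'a \<Rightarrow> 'a \<Rightarrow> 'a \<Rightarrow> bool" where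
  "adde adj x y = (\<lambda>u v. adj u v \<or> (u = x \<and> v = y) \<or> (u = y \<and> v = x))"

lemma adde_symirr: "symirr adj \<Longrightarrow> x \<noteq> y \<Longrightarrow> symirr (adde adj x y)"
  unfolding symirr_def adde_def by metis

lemma adde_deg:
  assumes fin: "finite W" and deg: "\<forall>v\<in>W. card (nbrs adj W v) \<le> D" and A: "A \<subseteq> W" "x \<in> A" "y \<in> A"
    and p: "p \<in> W - A" "adj x p" and q: "q \<in> W - A" "adj y q" and v: "v \<in> A"
  shows "card (nbrs (adde adj x y) A v) \<le> D"
proof -
  have fA: "finite A" using finite_subset[OF A(1) fin] .
  have gen: "card (nbrs adj A u) < D" if "u \<in> A" "r \<in> W - A" "adj u r" for u r
  proof -
    have "nbrs adj A u \<subset> nbrs adj W u" using that A unfolding nbrs_def by auto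
    hence "card (nbrs adj A u) < card (nbrs adj W u)" using fin by (simp add: finite_nbrs psubset_card_mono)
    thus ?thesis using deg that A by force
  qed
  show ?thesis
  proof (cases "v = x \<or> v = y")
    case True
    have "nbrs (adde adj x y) A v \<subseteq> insert (if v = x then y else x) (nbrs adj A v)"
      using True A unfolding nbrs_def adde_def by auto
    hence "card (nbrs (adde adj x y) A v) \<le> card (insert (if v = x then y else x) (nbrs adj A v))"
      using fA by (intro card_mono) (auto simp: finite_nbrs)
    also have "\<dots> \<le> Suc (card (nbrs adj A v))" using fA by (simp add: card_insert_le_m1 finite_nbrs)
    also have "\<dots> \<le> D" using True gen[OF A(2) p] gen[OF A(3) q] by auto
    finally show ?thesis .
  next
    case False
    hence "nbrs (adde adj x y) A v = nbrs adj A v" unfolding nbrs_def adde_def by auto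
    moreover have "card (nbrs adj A v) \<le> D" using deg_subset[OF fin deg A(1)] v by blast
    ultimately show ?thesis by simp
  qed
qed

lemma clq_adde:
  assumes "clq (adde adj x y) X" "\<not> (x \<in> X \<and> y \<in> X)"
  shows "clq adj X"
  unfolding clq_def
proof (intro ballI impI)
  fix u v assume "u \<in> X" "v \<in> X" "u \<noteq> v"
  hence "adde adj x y u v" "\<not> (u = x \<and> v = y)" "\<not> (u = y \<and> v = x)" using assms unfolding clq_def by auto
  thus "adj u v" unfolding adde_def by auto
qed

lemma ne_of_card: "card (Z::'a set) = D - 1 \<Longrightarrow> 3 \<le> D \<Longrightarrow> Z \<noteq> {}"
  by auto

theorem brooks:
  assumes D3: "3 \<le> D"
  shows "finite W \<Longrightarrow> symirr adj \<Longrightarrow> \<forall>v\<in>W. card (nbrs adj W v) \<le> D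
    \<Longrightarrow> \<not> (\<exists>X\<subseteq>W. card X = Suc D \<and> clq adj X) \<Longrightarrow> colourable adj W D"
proof (induction "card W" arbitrary: W adj rule: less_induct)
  case less
  note fin = less.prems(1) and si = less.prems(2) and deg = less.prems(3) and ncl = less.prems(4)
  have IH: "colourable adj' W' D" if "card W' < card W" "finite W'" "symirr adj'" "\<forall>v\<in>W'. card (nbrs adj' W' v) \<le> D"
    "\<not> (\<exists>X\<subseteq>W'. card X = Suc D \<and> clq adj' X)" for W' :: "'a set" and adj'
    using less.hyps[OF that(1) that(2) that(3) that(4) that(5)] .
  have IHs: "colourable adj W' D" if "W' \<subseteq> W" "card W' < card W" for W'
    using IH[OF that(2) finite_subset[OF that(1) fin] si deg_subset[OF fin deg that(1)] noclq_subset[OF ncl that(1)]] .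
  have sym: "\<And>u v. adj u v \<longleftrightarrow> adj v u" using symirr_sym[OF si] by blast
  have irr: "\<And>u. \<not> adj u u" using symirr_irr[OF si] by blast
  show ?case
  proof (cases "W = {}")
    case True thus ?thesis unfolding colourable_def pcol_def by auto
  next
    case Wne: False
    show ?thesis
    proof (cases "\<exists>v\<in>W. card (nbrs adj W v) < D")
      case True
      then obtain v where v: "v \<in> W" "card (nbrs adj W v) < D" by blast
      have "card (W - {v}) < card W" using v fin by (meson card_Diff1_less)
      then obtain f where f: "\<forall>u\<in>W - {v}. f u < D" "pcol adj (W - {v}) f"
        using IHs[of "W - {v}"] unfolding colourable_def by auto
      obtain c where c: "c \<in> {0..<D}" "pcol adj W (f(v := c))"
        using extend_one[OF fin si v(1) f(2), of "{0..<D}"] v(2) by auto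
      show ?thesis unfolding colourable_def using f c by (intro exI[of _ "f(v := c)"]) auto
    next
      case False
      hence reg: "\<forall>v\<in>W. card (nbrs adj W v) = D" using deg by (simp add: le_antisym not_less)
      show ?thesis
      proof (cases "\<exists>S. S \<subseteq> W \<and> S \<noteq> {} \<and> S \<noteq> W \<and> (\<forall>u\<in>S. \<forall>v\<in>W - S. \<not> adj u v)")
        case True
        then obtain S where S: "S \<subseteq> W" "S \<noteq> {}" "S \<noteq> W" "\<forall>u\<in>S. \<forall>v\<in>W - S. \<not> adj u v" by blast
        have c1: "card S < card W" using S fin by (simp add: psubset_card_mono)
        have c2: "card (W - S) < card W" using S fin
          by (metis Diff_subset Diff_disjoint Int_absorb2 finite_subset psubset_card_mono psubset_eq)
        obtain f1 where f1: "\<forall>u\<in>S. f1 u < D" "pcol adj S f1" using IHs[OF S(1) c1] unfolding colourable_def by auto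
        obtain f2 where f2: "\<forall>u\<in>W - S. f2 u < D" "pcol adj (W - S) f2" using IHs[OF _ c2] unfolding colourable_def by auto
        have "colourable adj (S \<union> (W - S)) D"
          by (rule glue[OF f1(2) f2(2) sw_inj[of 0 0] f1(1) f2(1)]) (use S sym in \<open>auto simp: sw_def\<close>)
        thus ?thesis using S by (simp add: Un_absorb1)
      next
        case False
        hence conn: "\<And>S. S \<subseteq> W \<Longrightarrow> S \<noteq> {} \<Longrightarrow> S \<noteq> W \<Longrightarrow> \<exists>u\<in>S. \<exists>v\<in>W - S. adj u v" by blast
        obtain z where z: "z \<in> W" using Wne by blast
        have "\<not> clq adj (nbrs adj W z)"
        proof
          assume cl: "clq adj (nbrs adj W z)"
          have "z \<notin> nbrs adj W z" using irr unfolding nbrs_def by auto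
          hence "card (insert z (nbrs adj W z)) = Suc D" using reg z fin by (simp add: finite_nbrs)
          moreover have "clq adj (insert z (nbrs adj W z))" using cl sym unfolding clq_def nbrs_def by auto
          moreover have "insert z (nbrs adj W z) \<subseteq> W" using z unfolding nbrs_def by auto
          ultimately show False using ncl by blast
        qed
        then obtain x y where xy: "x \<in> W" "y \<in> W" "adj z x" "adj z y" "x \<noteq> y" "\<not> adj x y"
          unfolding clq_def nbrs_def by auto
        define W' where "W' = W - {x, y}"
        define L where "L w = {0..<D} - (if adj w x \<or> adj w y then {0} else {})" for w
        have xW': "x \<notin> W'" "y \<notin> W'" unfolding W'_def by auto
        have finW': "finite W'" using fin unfolding W'_def by simp
        have zx: "z \<noteq> x" "z \<noteq> y" using xy irr by auto
        show ?thesis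
        proof (cases "\<forall>S\<subseteq>W'. S \<noteq> {} \<longrightarrow> (\<exists>w\<in>S. card (nbrs adj S w) < card (L w))")
          case True
          obtain g where g: "\<forall>w\<in>W'. g w \<in> L w" "pcol adj W' g"
            using list_engine[OF finW' si True] by blast
          define f where "f = g(x := 0, y := 0)"
          have "\<forall>v\<in>W. f v < D"
          proof
            fix v assume v: "v \<in> W"
            show "f v < D"
            proof (cases "v = x \<or> v = y")
              case True thus ?thesis unfolding f_def using D3 by auto
            next
              case False
              hence "v \<in> W'" using v unfolding W'_def by auto
              thus ?thesis using g False unfolding f_def L_def by auto
            qed
          qed
          moreover have "pcol adj W f" unfolding pcol_def
          proof (intro ballI impI)
            fix u v assume u: "u \<in> W" and v: "v \<in> W" and a: "adj u v"
            have uv: "u \<noteq> v" using a irr by auto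
            show "f u \<noteq> f v"
            proof (cases "u = x \<or> u = y")
              case True note ux = this
              show ?thesis
              proof (cases "v = x \<or> v = y")
                case True thus ?thesis using ux uv a xy sym by auto
              next
                case False
                hence "v \<in> W'" using v unfolding W'_def by auto
                moreover have "adj v x \<or> adj v y" using ux a sym by auto
                ultimately have "g v \<noteq> 0" using g unfolding L_def by auto
                thus ?thesis using ux False unfolding f_def by auto
              qed
            next
              case False note ux = this
              show ?thesis
              proof (cases "v = x \<or> v = y")
                case True
                have "u \<in> W'" using u ux unfolding W'_def by auto
                moreover have "adj u x \<or> adj u y" using True a by auto
                ultimately have "g u \<noteq> 0" using g unfolding L_def by auto
                thus ?thesis using ux True unfolding f_def by auto
              next
                case False
                have "u \<in> W'" "v \<in> W'" using u v ux False unfolding W'_def by auto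
                thus ?thesis using g(2) a ux False unfolding pcol_def f_def by auto
              qed
            qed
          qed
          ultimately show ?thesis unfolding colourable_def by blast
        next
          case False
          then obtain K where K: "K \<subseteq> W'" "K \<noteq> {}" "\<forall>w\<in>K. card (L w) \<le> card (nbrs adj K w)"
            by (auto simp: not_less)
          have finK: "finite K" using finW' K(1) finite_subset by auto
          have Kprop: "\<not> (adj w x \<and> adj w y) \<and> (\<forall>u\<in>W' - K. \<not> adj w u)" if w: "w \<in> K" for w
          proof -
            have wW: "w \<in> W" using w K W'_def by auto
            have cW: "card (nbrs adj W w) = D" using reg wW by blast
            have fnw: "finite (nbrs adj W w)" by (rule finite_nbrs[OF fin])
            have fnk: "finite (nbrs adj K w)" by (rule finite_nbrs[OF finK])
            have nkx: "x \<notin> nbrs adj K w" "y \<notin> nbrs adj K w" using K xW' unfolding nbrs_def by auto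
            have ksub: "nbrs adj K w \<subseteq> nbrs adj W w" using K W'_def by (intro nbrs_mono) auto
            have cl: "card (L w) \<le> card (nbrs adj K w)" using K(3) w by blast
            show ?thesis
            proof (intro conjI ballI notI)
              assume both: "adj w x \<and> adj w y"
              have "insert x (insert y (nbrs adj K w)) \<subseteq> nbrs adj W w" using both ksub xy unfolding nbrs_def by auto
              hence "card (insert x (insert y (nbrs adj K w))) \<le> D" using cW fnw card_mono by metis
              hence "card (nbrs adj K w) + 2 \<le> D" using nkx fnk xy by simp
              moreover have "card (L w) = D - 1" using both D3 unfolding L_def by simp
              ultimately show False using cl D3 by linarith
            next
              fix u assume u: "u \<in> W' - K" and a: "adj w u"
              have uk: "u \<notin> nbrs adj K w" unfolding nbrs_def using u by auto
              show False
              proof (cases "adj w x \<or> adj w y")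
                case True
                then obtain e where e: "e \<in> {x, y}" "adj w e" by blast
                have ue: "u \<noteq> e" using u e W'_def by auto
                have ek: "e \<notin> nbrs adj K w" using e nkx by auto
                have "insert e (insert u (nbrs adj K w)) \<subseteq> nbrs adj W w"
                  using e ksub u a xy unfolding nbrs_def W'_def by auto
                hence "card (insert e (insert u (nbrs adj K w))) \<le> D" using cW fnw card_mono by metis
                hence "card (nbrs adj K w) + 2 \<le> D" using uk ek ue fnk by simp
                moreover have "card (L w) = D - 1" using True D3 unfolding L_def by simp
                ultimately show False using cl D3 by linarith
              next
                case False
                have "insert u (nbrs adj K w) \<subseteq> nbrs adj W w"
                  using ksub u a unfolding nbrs_def W'_def by auto
                hence "card (insert u (nbrs adj K w)) \<le> D" using cW fnw card_mono by metis
                hence "card (nbrs adj K w) + 1 \<le> D" using uk fnk by simp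
                moreover have "card (L w) = D" using False unfolding L_def by simp
                ultimately show False using cl by linarith
              qed
            qed
          qed
          have zK: "z \<notin> K" using Kprop xy sym by blast
          have KW: "K \<subseteq> W" using K W'_def by auto
          obtain w0 u0 where w0: "w0 \<in> K" "u0 \<in> W - K" "adj w0 u0"
            using conn[OF KW K(2)] xW' K(1) xy by blast
          have u0: "u0 = x \<or> u0 = y" using w0 Kprop W'_def by auto
          define L' where "L' = W' - K"
          have Weq: "W = K \<union> L' \<union> {x, y}" using K(1) xy unfolding L'_def W'_def by auto
          have disj: "K \<inter> L' = {}" "x \<notin> K" "y \<notin> K" "x \<notin> L'" "y \<notin> L'" using xW' K(1) unfolding L'_def by auto
          have cut: "colourable adj W D" if e: "e \<in> {x, y}" and ne: "\<forall>w\<in>K. \<forall>u\<in>W - K - {e}. \<not> adj w u" for e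
          proof -
            obtain e' where e': "e' \<in> {x, y}" "e' \<noteq> e" using e xy by auto
            have cA: "card (insert e K) < card W"
              using e e' xy disj KW fin by (intro psubset_card_mono) auto
            have cB: "card (W - K) < card W" using K(2) KW fin
              by (metis Diff_subset Diff_disjoint Int_absorb2 finite_subset psubset_card_mono psubset_eq)
            have eW: "e \<in> W" using e xy by auto
            obtain f1 where f1: "\<forall>u\<in>insert e K. f1 u < D" "pcol adj (insert e K) f1"
              using IHs[OF _ cA] KW eW unfolding colourable_def by auto
            obtain f2 where f2: "\<forall>u\<in>W - K. f2 u < D" "pcol adj (W - K) f2"
              using IHs[OF _ cB] unfolding colourable_def by auto
            have "colourable adj (insert e K \<union> (W - K)) D"
            proof (rule glue[OF f1(2) f2(2) sw_inj[of "f1 e" "f2 e"] f1(1) f2(1)])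
              show "\<forall>c<D. sw (f1 e) (f2 e) c < D" using f1 f2 eW disj e by (auto intro!: sw_lt)
              show "\<forall>v\<in>insert e K \<inter> (W - K). sw (f1 e) (f2 e) (f1 v) = f2 v"
                using disj e by (auto simp: sw_def)
              show "\<forall>u\<in>insert e K - (W - K). \<forall>v\<in>W - K - insert e K. \<not> adj u v \<and> \<not> adj v u"
                using ne sym eW by auto
            qed
            moreover have "insert e K \<union> (W - K) = W" using eW KW by auto
            ultimately show ?thesis by simp
          qed
          show ?thesis
          proof (cases "\<forall>w\<in>K. \<not> adj w y")
            case True
            show ?thesis
            proof (rule cut[of x])
              show "\<forall>w\<in>K. \<forall>u\<in>W - K - {x}. \<not> adj w u"
                using True Kprop unfolding W'_def by auto
            qed simp
          next
            case False
            then obtain w2 where w2: "w2 \<in> K" "adj w2 y" by blast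
            show ?thesis
            proof (cases "\<forall>w\<in>K. \<not> adj w x")
              case True
              show ?thesis
              proof (rule cut[of y])
                show "\<forall>w\<in>K. \<forall>u\<in>W - K - {y}. \<not> adj w u"
                  using True Kprop unfolding W'_def by auto
              qed simp
            next
              case False
              then obtain w1 where w1: "w1 \<in> K" "adj w1 x" by blast
              define A where "A = insert x (insert y K)"
              define B where "B = insert x (insert y L')"
              have AB: "A \<union> B = W" "A \<inter> B = {x, y}" "A - B = K" "B - A = L'"
                using Weq disj unfolding A_def B_def by auto
              have AW: "A \<subseteq> W" "B \<subseteq> W" using AB by auto
              have zA: "z \<in> W - A" using zK z zx unfolding A_def by auto
              have w1B: "w1 \<in> W - B" "w2 \<in> W - B" using w1 w2 KW disj unfolding B_def by auto
              have cA: "card A < card W" using AW zA fin by (intro psubset_card_mono) auto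
              have cB: "card B < card W" using AW w1B fin by (intro psubset_card_mono) auto
              have noKL: "\<forall>u\<in>A - B. \<forall>v\<in>B - A. \<not> adj u v \<and> \<not> adj v u"
                using AB Kprop sym unfolding L'_def by auto
              have finA: "finite A" "finite B" using AW fin finite_subset by auto
              have siE: "symirr (adde adj x y)" using adde_symirr[OF si xy(5)] .
              have ncE_A: "\<not> (\<exists>X\<subseteq>A. card X = Suc D \<and> clq (adde adj x y) X)"
              proof
                assume "\<exists>X\<subseteq>A. card X = Suc D \<and> clq (adde adj x y) X"
                then obtain X where X: "X \<subseteq> A" "card X = Suc D" "clq (adde adj x y) X" by blast
                show False
                proof (cases "x \<in> X \<and> y \<in> X")
                  case True
                  have "card (X - {x, y}) = D - 1" using X True xy(5) by (simp add: card_Diff_subset)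
                  hence "X - {x, y} \<noteq> {}" by (rule ne_of_card[OF _ D3])
                  then obtain w where w: "w \<in> X" "w \<noteq> x" "w \<noteq> y" by blast
                  hence wK: "w \<in> K" using X unfolding A_def by auto
                  have "adj w x" "adj w y" using X(3) True w unfolding clq_def adde_def by auto
                  thus False using Kprop[OF wK] by simp
                next
                  case False
                  have c: "clq adj X" by (rule clq_adde[OF X(3) False])
                  have "X \<subseteq> W" using X(1) AW(1) by (rule subset_trans)
                  thus False using ncl X(2) c by blast
                qed
              qed
              have xz: "adj x z" "adj y z" using xy sym by auto
              have xyA: "x \<in> A" "y \<in> A" unfolding A_def by auto
              have degA: "\<forall>v\<in>A. card (nbrs (adde adj x y) A v) \<le> D"
                using adde_deg[OF fin deg AW(1) xyA zA xz(1) zA xz(2)] by blast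
              obtain f1 where f1: "\<forall>u\<in>A. f1 u < D" "pcol (adde adj x y) A f1"
                using IH[OF cA finA(1) siE degA ncE_A] unfolding colourable_def by blast
              have f1xy: "f1 x \<noteq> f1 y" using f1(2) unfolding pcol_def adde_def A_def by auto
              have xyB: "x \<in> B" "y \<in> B" unfolding B_def by auto
              have xw: "adj x w1" "adj y w2" using w1 w2 sym by auto
              have degB: "\<forall>v\<in>B. card (nbrs (adde adj x y) B v) \<le> D"
                using adde_deg[OF fin deg AW(2) xyB w1B(1) xw(1) w1B(2) xw(2)] by blast
              have f1A: "pcol adj A f1" by (rule pcol_mono_adj[OF f1(2)]) (simp add: adde_def)
              show ?thesis
              proof (cases "\<exists>X\<subseteq>B. card X = Suc D \<and> clq (adde adj x y) X")
                case False
                obtain f2 where f2: "\<forall>u\<in>B. f2 u < D" "pcol (adde adj x y) B f2"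
                  using IH[OF cB finA(2) siE degB False] unfolding colourable_def by blast
                have f2xy: "f2 x \<noteq> f2 y" using f2(2) unfolding pcol_def adde_def B_def by auto
                have f2B: "pcol adj B f2" by (rule pcol_mono_adj[OF f2(2)]) (simp add: adde_def)
                obtain \<sigma> where \<sigma>: "inj \<sigma>" "\<sigma> (f1 x) = f2 x" "\<sigma> (f1 y) = f2 y"
                  "\<forall>c. c < D \<longrightarrow> f1 x < D \<longrightarrow> f1 y < D \<longrightarrow> f2 x < D \<longrightarrow> f2 y < D \<longrightarrow> \<sigma> c < D"
                  using two_perm[OF f1xy f2xy] by blast
                have "colourable adj (A \<union> B) D"
                proof (rule glue[OF f1A f2B \<sigma>(1) f1(1) f2(1) _ _ noKL])
                  show "\<forall>c<D. \<sigma> c < D" using \<sigma>(4) f1(1) f2(1) xyA xyB by blast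
                  show "\<forall>v\<in>A \<inter> B. \<sigma> (f1 v) = f2 v" using AB(2) \<sigma> by auto
                qed
                thus ?thesis using AB by simp
              next
                case True
                then obtain X where X: "X \<subseteq> B" "card X = Suc D" "clq (adde adj x y) X" by blast
                have xX: "x \<in> X \<and> y \<in> X"
                proof (rule ccontr)
                  assume "\<not> (x \<in> X \<and> y \<in> X)"
                  hence c: "clq adj X" by (rule clq_adde[OF X(3)])
                  have "X \<subseteq> W" using X(1) AW(2) by (rule subset_trans)
                  thus False using ncl X(2) c by blast
                qed
                define Y where "Y = X - {x, y}"
                have YL: "Y \<subseteq> L'" using X(1) unfolding Y_def B_def by auto
                have cY: "card Y = D - 1" using X xX xy(5) unfolding Y_def by (simp add: card_Diff_subset)
                have Yadj: "adj x w \<and> adj y w" if "w \<in> Y" for w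
                  using X(3) xX that unfolding Y_def clq_def adde_def by auto
                have finL': "finite L'" using finW' unfolding L'_def by simp
                have nL: "nbrs adj L' e = Y" if e: "e = x \<or> e = y" and ww: "ww \<in> K" "adj e ww" for e ww
                proof -
                  have s1: "Y \<subseteq> nbrs adj L' e" using YL Yadj e unfolding nbrs_def by auto
                  have "insert ww (nbrs adj L' e) \<subseteq> nbrs adj W e"
                    using ww KW L'_def W'_def unfolding nbrs_def by auto
                  hence "card (insert ww (nbrs adj L' e)) \<le> D" using reg e xy card_mono finite_nbrs[OF fin]
                    by (metis (no_types, lifting))
                  moreover have "ww \<notin> nbrs adj L' e" using ww disj unfolding nbrs_def by auto
                  ultimately have "card (nbrs adj L' e) \<le> D - 1" using finite_nbrs[OF finL'] by simp
                  hence "card (nbrs adj L' e) \<le> card Y" using cY by simp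
                  thus ?thesis using s1 finite_nbrs[OF finL'] card_subset_eq by (metis antisym card_mono)
                qed
                have nLx: "nbrs adj L' x = Y" using nL[of x w1] xw w1 by simp
                have nLy: "nbrs adj L' y = Y" using nL[of y w2] xw w2 by simp
                have nK: "card (nbrs adj K e) \<le> 1" if e: "e = x \<or> e = y" for e
                proof -
                  have "nbrs adj K e \<union> Y \<subseteq> nbrs adj W e" using KW YL Yadj e
                    unfolding nbrs_def L'_def W'_def by auto
                  hence "card (nbrs adj K e \<union> Y) \<le> D" using reg e xy card_mono finite_nbrs[OF fin]
                    by (metis (no_types, lifting))
                  moreover have "nbrs adj K e \<inter> Y = {}" using YL disj unfolding nbrs_def by auto
                  ultimately have "card (nbrs adj K e) + card Y \<le> D"
                    using finite_nbrs[OF finK] finite_subset[OF YL finL'] by (simp add: card_Un_disjoint)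
                  thus ?thesis using cY D3 by simp
                qed
                have contr: "\<exists>f. (\<forall>u\<in>insert x (insert y S). f u < D) \<and> pcol adj (insert x (insert y S)) f \<and> f x = f y"
                  if S: "S \<subseteq> W - {x, y}" and lt: "card (nbrs adj S x \<union> nbrs adj S y) < D" for S
                proof -
                  have finS: "finite S" using S fin finite_subset by blast
                  have xS: "x \<notin> S" "y \<notin> S" using S by auto
                  have SW: "S \<subseteq> W" using S by auto
                  have c1: "card (insert x S) < card W" using S xy fin by (intro psubset_card_mono) auto
                  have siC: "symirr (cadj adj x y)" using cadj_symirr[OF si xy(6)] .
                  have nx: "nbrs (cadj adj x y) (insert x S) x = nbrs adj S x \<union> nbrs adj S y"
                    by (rule cadj_x[OF si xS(1) xy(6)])
                  have degC: "\<forall>v\<in>insert x S. card (nbrs (cadj adj x y) (insert x S) v) \<le> D"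
                  proof
                    fix v assume v: "v \<in> insert x S"
                    show "card (nbrs (cadj adj x y) (insert x S) v) \<le> D"
                    proof (cases "v = x")
                      case True thus ?thesis using nx lt by simp
                    next
                      case False
                      hence vS: "v \<in> S" using v by simp
                      have "card (nbrs (cadj adj x y) (insert x S) v) \<le> card (nbrs adj W v)"
                        by (rule cadj_deg[OF fin si vS S xy(1) xy(2)])
                      thus ?thesis using reg vS SW by auto
                    qed
                  qed
                  have ncC: "\<not> (\<exists>X\<subseteq>insert x S. card X = Suc D \<and> clq (cadj adj x y) X)"
                    by (rule cadj_noclique[OF finS ncl SW xS(1)]) (use nx lt in simp)
                  obtain fc where fc: "\<forall>u\<in>insert x S. fc u < D" "pcol (cadj adj x y) (insert x S) fc"
                    using IH[OF c1 _ siC degC ncC] finS unfolding colourable_def by auto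
                  have "pcol adj (insert x (insert y S)) (fc(y := fc x))"
                    by (rule cadj_pcol[OF fc(2) xy(6) si xS(2) xy(5)])
                  moreover have "\<forall>u\<in>insert x (insert y S). (fc(y := fc x)) u < D" using fc(1) by auto
                  ultimately show ?thesis by (intro exI[of _ "fc(y := fc x)"]) auto
                qed
                have "card (nbrs adj K x \<union> nbrs adj K y) \<le> card (nbrs adj K x) + card (nbrs adj K y)"
                  by (rule card_Un_le)
                hence "card (nbrs adj K x \<union> nbrs adj K y) < D" using nK[of x] nK[of y] D3 by simp
                then obtain f1' where f1': "\<forall>u\<in>A. f1' u < D" "pcol adj A f1'" "f1' x = f1' y"
                  using contr[of K] K(1) unfolding A_def W'_def by blast
                have "card (nbrs adj L' x \<union> nbrs adj L' y) < D" using nLx nLy cY D3 by simp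
                then obtain f2' where f2': "\<forall>u\<in>B. f2' u < D" "pcol adj B f2'" "f2' x = f2' y"
                  using contr[of L'] unfolding B_def L'_def W'_def by blast
                have "colourable adj (A \<union> B) D"
                proof (rule glue[OF f1'(2) f2'(2) sw_inj[of "f1' x" "f2' x"] f1'(1) f2'(1) _ _ noKL])
                  show "\<forall>c<D. sw (f1' x) (f2' x) c < D" using f1'(1) f2'(1) xyA xyB by (auto intro!: sw_lt)
                  show "\<forall>v\<in>A \<inter> B. sw (f1' x) (f2' x) (f1' v) = f2' v"
                    using AB(2) f1'(3) f2'(3) by (auto simp: sw_def)
                qed
                thus ?thesis using AB by simp
              qed
            qed
          qed
        qed
      qed
    qed
  qed
qed

fun walk :: "('a \<Rightarrow> 'a \<Rightarrow> bool) \<Rightarrow> 'a list \<Rightarrow> bool" where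
  "walk R [] = True"
| "walk R [x] = True"
| "walk R (x # y # xs) = (R x y \<and> walk R (y # xs))"

lemma sub_card_eq: "finite B \<Longrightarrow> A \<subseteq> B \<Longrightarrow> card B \<le> card A \<Longrightarrow> A = B"
  using card_mono card_subset_eq le_antisym by metis

lemma walk_Cons: "walk R (x # xs) \<longleftrightarrow> walk R xs \<and> (xs \<noteq> [] \<longrightarrow> R x (hd xs))"
  by (cases xs) auto

lemma walk_append:
  "walk R (xs @ zs) \<longleftrightarrow> walk R xs \<and> walk R zs \<and> (xs \<noteq> [] \<longrightarrow> zs \<noteq> [] \<longrightarrow> R (last xs) (hd zs))"
  by (induction xs) (auto simp: walk_Cons)

lemma walk_rev: assumes "\<And>a b. R a b \<Longrightarrow> R b a" shows "walk R (rev xs) = walk R xs"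
proof (induction xs)
  case Nil thus ?case by simp
next
  case (Cons x xs)
  thus ?case using assms by (auto simp: walk_append walk_Cons hd_rev last_rev)
qed

lemma walk_take: "walk R xs \<Longrightarrow> walk R (take n xs)"
  using walk_append[of R "take n xs" "drop n xs"] by simp

lemma walk_of_nth: "(\<forall>i. Suc i < length xs \<longrightarrow> R (xs ! i) (xs ! Suc i)) \<Longrightarrow> walk R xs"
proof (induction xs)
  case Nil thus ?case by simp
next
  case (Cons x xs)
  have "walk R xs" using Cons.prems by (intro Cons.IH) (metis Suc_less_eq length_Cons nth_Cons_Suc)
  moreover have "xs \<noteq> [] \<longrightarrow> R x (hd xs)" using Cons.prems[rule_format, of 0] by (simp add: hd_conv_nth)
  ultimately show ?case by (simp add: walk_Cons)
qed

lemma path_block: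
  assumes fin: "finite W" and si: "symirr adj" and t2: "2 \<le> t"
    and deg: "\<forall>v\<in>W. t - 2 \<le> card (nbrs adj W v)"
    and nop: "\<not> (\<exists>ps. length ps = t \<and> distinct ps \<and> set ps \<subseteq> W \<and> walk adj ps)"
    and v: "v \<in> W"
  shows "card (nbrs adj W v) = t - 2 \<and> clq adj (nbrs adj W v)"
proof -
  have sym: "\<And>a b. adj a b \<longleftrightarrow> adj b a" using symirr_sym[OF si] by blast
  have irr: "\<And>a. \<not> adj a a" using symirr_irr[OF si] by blast
  define P where "P ps \<longleftrightarrow> distinct ps \<and> set ps \<subseteq> W \<and> walk adj ps \<and> v \<in> set ps" for ps
  have P1: "P [v]" using v unfolding P_def by simp
  have Pb: "length ps \<le> card W" if "P ps" for ps
  proof -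
    have "length ps = card (set ps)" using that unfolding P_def by (simp add: distinct_card)
    also have "\<dots> \<le> card W" using that fin unfolding P_def by (simp add: card_mono)
    finally show ?thesis .
  qed
  have "\<exists>n. (\<exists>ps. P ps \<and> length ps = n) \<and> (\<forall>y. (\<exists>ps. P ps \<and> length ps = y) \<longrightarrow> y \<le> n)"
    by (rule ex_has_greatest_nat[where k=1 and b="Suc (card W)"]) (use P1 Pb in force)+
  then obtain ps where ps: "P ps" and pmax: "\<And>q. P q \<Longrightarrow> length q \<le> length ps"
    by metis
  have psd: "distinct ps" "set ps \<subseteq> W" "walk adj ps" "v \<in> set ps" using ps unfolding P_def by auto
  have pne: "ps \<noteq> []" using psd by auto
  have plt: "length ps \<le> t - 1"
  proof (rule ccontr)
    assume "\<not> length ps \<le> t - 1"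
    hence "length (take t ps) = t" by simp
    moreover have "distinct (take t ps)" "set (take t ps) \<subseteq> W" "walk adj (take t ps)"
      using psd by (auto intro: walk_take dest: in_set_takeD)
    ultimately show False using nop by blast
  qed
  have cardps: "card (set ps) = length ps" using distinct_card[OF psd(1)] .
  have endp: "nbrs adj W e = set ps - {e}" if e: "e = hd ps \<or> e = last ps" for e
  proof -
    have sub: "nbrs adj W e \<subseteq> set ps - {e}"
    proof
      fix u assume u: "u \<in> nbrs adj W e"
      hence uW: "u \<in> W" "adj e u" unfolding nbrs_def by auto
      have "u \<noteq> e" using uW irr by auto
      moreover have "u \<in> set ps"
      proof (rule ccontr)
        assume un: "u \<notin> set ps"
        show False
        proof (cases "e = hd ps")
          case True
          have "P (u # ps)" using psd un uW pne True sym unfolding P_def by (auto simp: walk_Cons)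
          thus False using pmax by fastforce
        next
          case False
          hence el: "e = last ps" using e by simp
          have "walk adj (ps @ [u])" using psd uW el pne by (simp add: walk_append)
          hence "P (ps @ [u])" using psd un uW unfolding P_def by auto
          thus False using pmax by fastforce
        qed
      qed
      ultimately show "u \<in> set ps - {e}" by simp
    qed
    have eW: "e \<in> W" using e pne psd by auto
    have "t - 2 \<le> card (nbrs adj W e)" using deg eW by blast
    also have "\<dots> \<le> card (set ps - {e})" using sub by (intro card_mono) auto
    also have "\<dots> = length ps - 1" using cardps e pne by (auto simp: card_Diff_singleton)
    finally have "t - 2 \<le> length ps - 1" .
    hence "length ps - 1 \<le> card (nbrs adj W e)" using plt t2 \<open>t - 2 \<le> card (nbrs adj W e)\<close> by linarith
    hence "card (set ps - {e}) \<le> card (nbrs adj W e)" using cardps e pne by (auto simp: card_Diff_singleton)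
    thus ?thesis using sub by (intro sub_card_eq) auto
  qed
  have plen: "length ps = t - 1"
  proof -
    have "t - 2 \<le> card (nbrs adj W (hd ps))" using deg pne psd by (simp add: subset_iff)
    also have "\<dots> = length ps - 1" using endp[of "hd ps"] cardps pne by (simp add: card_Diff_singleton)
    finally show ?thesis using plt t2 pne by (cases ps) auto
  qed
  have closed: "u \<in> set ps" if w: "w \<in> set ps" and u: "u \<in> W" "adj w u" for w u
  proof (rule ccontr)
    assume un: "u \<notin> set ps"
    obtain pre post where sp: "ps = pre @ w # post" using split_list[OF w] by blast
    have "pre \<noteq> []"
    proof
      assume "pre = []"
      hence "w = hd ps" using sp by simp
      hence "u \<in> set ps" using endp[of w] u unfolding nbrs_def by auto
      thus False using un by simp
    qed
    moreover have "post \<noteq> []"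
    proof
      assume "post = []"
      hence "w = last ps" using sp by simp
      hence "u \<in> set ps" using endp[of w] u unfolding nbrs_def by auto
      thus False using un by simp
    qed
    ultimately have ha: "hd pre = hd ps" and lb: "last post = last ps" using sp by auto
    have "hd pre \<in> set pre" "last post \<in> set post" using \<open>pre \<noteq> []\<close> \<open>post \<noteq> []\<close> by auto
    moreover have "set pre \<inter> set post = {}" using psd(1) sp by auto
    ultimately have hl: "hd ps \<noteq> last ps" using ha lb by auto
    have eh: "nbrs adj W (hd ps) = set ps - {hd ps}" by (rule endp) simp
    have "last ps \<in> set ps" using pne by (rule last_in_set)
    hence "last ps \<in> set ps - {hd ps}" using hl by simp
    hence "last ps \<in> nbrs adj W (hd ps)" by (subst eh)
    hence ab: "adj (hd ps) (last ps)" unfolding nbrs_def by simp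
    define q where "q = u # (w # rev pre) @ rev post"
    have w1: "walk adj (pre @ [w])" using psd(3) sp walk_append[of adj "pre @ [w]" post] by simp
    have w2: "walk adj post" using psd(3) sp walk_append[of adj "pre @ [w]" post] by simp
    have "walk adj (w # rev pre)" using w1 walk_rev[of adj "pre @ [w]"] sym by simp
    moreover have "walk adj (rev post)" using w2 walk_rev[of adj post] sym by simp
    moreover have "adj (last (w # rev pre)) (hd (rev post))"
      using ab ha lb \<open>pre \<noteq> []\<close> \<open>post \<noteq> []\<close> by (simp add: last_rev hd_rev)
    ultimately have "walk adj ((w # rev pre) @ rev post)" using walk_append[of adj "w # rev pre" "rev post"] by simp
    hence wq: "walk adj q" using u sym[of u w] unfolding q_def by (simp add: walk_Cons)
    have dq: "distinct q" using psd(1) un sp unfolding q_def by auto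
    have sq: "set q \<subseteq> W" using psd(2) u sp unfolding q_def by auto
    have lq: "length q = t" using plen sp t2 unfolding q_def by simp
    show False using nop wq dq sq lq by blast
  qed
  have allw: "nbrs adj W w = set ps - {w}" if w: "w \<in> set ps" for w
  proof -
    have sub: "nbrs adj W w \<subseteq> set ps - {w}" using closed[OF w] irr unfolding nbrs_def by auto
    have wW: "w \<in> W" using w psd by auto
    have "card (set ps - {w}) = t - 2" using cardps w plen by (simp add: card_Diff_singleton)
    hence "card (set ps - {w}) \<le> card (nbrs adj W w)" using deg wW by simp
    thus ?thesis using sub by (intro sub_card_eq) auto
  qed
  have "card (nbrs adj W v) = t - 2" using allw[OF psd(4)] cardps plen psd(4) by (simp add: card_Diff_singleton)
  moreover have "clq adj (nbrs adj W v)"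
    unfolding clq_def
  proof (intro ballI impI)
    fix x y assume x: "x \<in> nbrs adj W v" and y: "y \<in> nbrs adj W v" and xy: "x \<noteq> y"
    have "x \<in> set ps" "y \<in> set ps" using x y allw[OF psd(4)] by auto
    hence "y \<in> nbrs adj W x" using allw xy y allw[OF psd(4)] by auto
    thus "adj x y" unfolding nbrs_def by simp
  qed
  ultimately show ?thesis by simp
qed

lemma nth_of_walk: "walk R xs \<Longrightarrow> Suc i < length xs \<Longrightarrow> R (xs ! i) (xs ! Suc i)"
proof (induction xs arbitrary: i)
  case Nil thus ?case by simp
next
  case (Cons x xs)
  show ?case
  proof (cases i)
    case 0
    hence "xs \<noteq> []" using Cons.prems by auto
    thus ?thesis using Cons.prems 0 by (simp add: walk_Cons hd_conv_nth)
  next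
    case (Suc i')
    have "walk R xs" using Cons.prems by (simp add: walk_Cons)
    thus ?thesis using Cons.IH[of i'] Cons.prems Suc by simp
  qed
qed

lemma block_dvd:
  assumes fin: "finite X" and B: "\<forall>v\<in>X. B v \<subseteq> X \<and> v \<in> B v \<and> card (B v) = b"
    and eq: "\<forall>u\<in>X. \<forall>v\<in>B u. B v = B u"
  shows "b dvd card X"
proof -
  have U: "\<Union>(B ` X) = X" using B by blast
  have "b * card (B ` X) = card (\<Union>(B ` X))"
  proof (rule card_partition)
    show "finite (B ` X)" using fin by simp
    show "finite (\<Union>(B ` X))" using U fin by simp
    show "\<And>c. c \<in> B ` X \<Longrightarrow> card c = b" using B by auto
    show "\<And>c1 c2. c1 \<in> B ` X \<Longrightarrow> c2 \<in> B ` X \<Longrightarrow> c1 \<noteq> c2 \<Longrightarrow> c1 \<inter> c2 = {}"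
    proof -
      fix c1 c2 assume c1: "c1 \<in> B ` X" and c2: "c2 \<in> B ` X" and ne: "c1 \<noteq> c2"
      obtain u1 where u1: "u1 \<in> X" "c1 = B u1" using c1 by blast
      obtain u2 where u2: "u2 \<in> X" "c2 = B u2" using c2 by blast
      show "c1 \<inter> c2 = {}"
      proof (rule ccontr)
        assume "c1 \<inter> c2 \<noteq> {}"
        then obtain w where w: "w \<in> B u1" "w \<in> B u2" using u1 u2 by blast
        have "B w = B u1" using eq u1(1) w(1) by blast
        moreover have "B w = B u2" using eq u2(1) w(2) by blast
        ultimately show False using ne u1 u2 by simp
      qed
    qed
  qed
  thus ?thesis using U by (metis dvd_triv_left)
qed

lemma pigeon:
  assumes fin: "finite W" and D: "0 < D" and f: "\<forall>v\<in>W. f v < D"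
  shows "\<exists>c<D. card W \<le> D * card {v\<in>W. f v = c}"
proof (rule ccontr)
  assume "\<not> (\<exists>c<D. card W \<le> D * card {v\<in>W. f v = c})"
  hence lt: "\<forall>c\<in>{..<D}. D * card {v\<in>W. f v = c} < card W" by auto
  have U: "W = (\<Union>c\<in>{..<D}. {v\<in>W. f v = c})" using f by auto
  have "card W = (\<Sum>c\<in>{..<D}. card {v\<in>W. f v = c})"
    by (subst U, rule card_UN_disjoint) (use fin in auto)
  hence "D * card W = (\<Sum>c\<in>{..<D}. D * card {v\<in>W. f v = c})" by (simp add: sum_distrib_left)
  also have "\<dots> < (\<Sum>c\<in>{..<D}. card W)" by (rule sum_strict_mono) (use D lt in auto)
  also have "\<dots> = D * card W" by simp
  finally show False by simp
qed

lemma arith_setup: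
  fixes r t k n :: nat
  assumes r2: "r \<ge> 2" and t2: "t \<ge> 2" and k1: "k \<ge> 1" and kt: "int k \<ge> int t - 3"
    and lo: "(r - 1) * (t - 1) * k < n" and hi: "n \<le> (r - 1) * (t - 1) * (k + 1)"
    and md: "m = nat \<lceil>real n / real (r - 1)\<rceil>"
  shows "(r - 1) * (m - 1) < n" "n \<le> (r - 1) * m" "(t - 1) * k < m"
    "t - 2 \<le> m div (k + 1)" "1 \<le> m div (k + 1)" "m div (k + 1) < m" "2 \<le> m" "m \<le> n"
    "\<lceil>(real k / real (k + 1)) * real_of_int \<lceil>real n / real (r - 1)\<rceil>\<rceil> = int (m - m div (k + 1))"
    "m div (k + 1) \<le> t - 2 \<Longrightarrow> \<not> (t - 1) dvd m \<and> 3 \<le> t \<and> 3 \<le> m \<and> (m = 3 \<longrightarrow> t = 3)"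
proof -
  define x where "x = real n / real (r - 1)"
  have rp: "real (r - 1) > 0" using r2 by simp
  have npos: "n > 0" using lo by simp
  have xpos: "x > 0" using rp npos unfolding x_def by simp
  have cpos: "\<lceil>x\<rceil> > 0" using xpos by simp
  have mi: "int m = \<lceil>x\<rceil>" using md cpos unfolding x_def by simp
  have mr: "real m = real_of_int \<lceil>x\<rceil>" using mi by (metis of_int_of_nat_eq)
  have m1: "real m - 1 < x" "x \<le> real m" using ceiling_correct[of x] mr by auto
  have mge1: "m \<ge> 1" using mi cpos by linarith
  have "real (r - 1) * (real m - 1) < real n"
    using m1(1) rp unfolding x_def by (simp add: field_simps)
  hence "real ((r - 1) * (m - 1)) < real n" using mge1 by (simp add: of_nat_diff)
  thus A: "(r - 1) * (m - 1) < n" by linarith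
  have "real n \<le> real (r - 1) * real m" using m1(2) rp unfolding x_def by (simp add: field_simps)
  hence "real n \<le> real ((r - 1) * m)" by simp
  thus B: "n \<le> (r - 1) * m" by linarith
  have "(r - 1) * ((t - 1) * k) < (r - 1) * m" using lo B mult.assoc[of "r - 1" "t - 1" k] by linarith
  thus C: "(t - 1) * k < m" by (simp only: mult_less_cancel1)
  have "(t - 2) * (k + 1) \<le> (t - 1) * k + 1"
  proof -
    obtain s where s: "t = s + 2" using t2 by (metis add.commute le_Suc_ex)
    have "s \<le> k + 1" using kt s by simp
    thus ?thesis using s by (simp add: algebra_simps)
  qed
  hence D0: "(t - 2) * (k + 1) \<le> m" using C by simp
  have "(t - 2) * (k + 1) div (k + 1) \<le> m div (k + 1)" using D0 by (rule div_le_mono)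
  moreover have "(t - 2) * (k + 1) div (k + 1) = t - 2" by (rule div_mult_self_is_m) simp
  ultimately show D: "t - 2 \<le> m div (k + 1)" by simp
  have "1 * k \<le> (t - 1) * k" by (rule mult_le_mono1) (use t2 in simp)
  hence km: "k + 1 \<le> m" using C by linarith
  hence "k + 1 \<le> m" .
  hence "(k + 1) div (k + 1) \<le> m div (k + 1)" by (rule div_le_mono)
  thus E: "1 \<le> m div (k + 1)" by simp
  show F: "m div (k + 1) < m" using mge1 k1 by (intro div_less_dividend) auto
  show "2 \<le> m" using km k1 by linarith
  have "1 * (m - 1) \<le> (r - 1) * (m - 1)" by (rule mult_le_mono1) (use r2 in simp)
  thus "m \<le> n" using A by linarith
  show "\<lceil>(real k / real (k + 1)) * real_of_int \<lceil>real n / real (r - 1)\<rceil>\<rceil> = int (m - m div (k + 1))"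
  proof -
    define j where "j = m div (k + 1)"
    define s where "s = m mod (k + 1)"
    have ms: "m = j * (k + 1) + s" unfolding j_def s_def by (rule div_mult_mod_eq[symmetric])
    have sk: "s < k + 1" unfolding s_def by simp
    have jm: "j \<le> m" unfolding j_def by simp
    have e1: "real_of_int \<lceil>real n / real (r - 1)\<rceil> = real m" using mr unfolding x_def by simp
    have e2: "real_of_int (int (m - j)) = real m - real j" using jm by simp
    have kp: "real k + 1 > 0" by simp
    have ineq1: "real m - real j - 1 < real k / (real k + 1) * real m"
    proof -
      have rm: "real m = real j * (real k + 1) + real s" using ms by (simp add: algebra_simps)
      have "real s < real k + 1" using sk by simp
      hence "(real m - real j - 1) * (real k + 1) < real k * real m" unfolding rm by (simp add: algebra_simps)
      thus ?thesis using kp by (simp add: field_simps)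
    qed
    have ineq2: "real k / (real k + 1) * real m \<le> real m - real j"
    proof -
      have rm: "real m = real j * (real k + 1) + real s" using ms by (simp add: algebra_simps)
      have "real k * real m \<le> (real m - real j) * (real k + 1)" unfolding rm by (simp add: algebra_simps)
      thus ?thesis using kp by (simp add: field_simps)
    qed
    have "real k / (real k + 1) = real k / real (k + 1)" by simp
    thus ?thesis unfolding e1 ceiling_eq_iff using ineq1 ineq2 e2 j_def by metis
  qed
  show "m div (k + 1) \<le> t - 2 \<Longrightarrow> \<not> (t - 1) dvd m \<and> 3 \<le> t \<and> 3 \<le> m \<and> (m = 3 \<longrightarrow> t = 3)"
  proof -
    assume a: "m div (k + 1) \<le> t - 2"
    hence j: "m div (k + 1) = t - 2" using D by simp
    have t3: "3 \<le> t" using j E by simp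
    have "m < (m div (k + 1) + 1) * (k + 1)" by (meson add_gr_0 div_less_iff_less_mult less_add_one zero_less_one)
    moreover have "m div (k + 1) + 1 = t - 1" using j t3 by simp
    ultimately have mu: "m < (t - 1) * (k + 1)" by metis
    have nd: "\<not> (t - 1) dvd m"
    proof
      assume "(t - 1) dvd m"
      then obtain a where a: "m = (t - 1) * a" by blast
      have "(t - 1) * k < (t - 1) * a" using C a by metis
      hence "k < a" by (metis mult_less_cancel1)
      moreover have "(t - 1) * a < (t - 1) * (k + 1)" using mu a by metis
      hence "a < k + 1" by (metis mult_less_cancel1)
      ultimately show False by simp
    qed
    have "(t - 1) * 1 \<le> (t - 1) * k" by (rule mult_le_mono2) (use k1 in simp)
    hence m3: "3 \<le> m" "m = 3 \<longrightarrow> t = 3" using C t3 by linarith+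
    thus ?thesis using nd t3 m3 by simp
  qed
qed

theorem theorem1p3:
  fixes V :: "'a set" and E :: "'a set set" and r t k n :: nat
  assumes "r \<ge> 2" and "t \<ge> 2" and "k \<ge> 1" and "int k \<ge> int t - 3"
    and "simple_graph V E" and "card V = n"
    and "(r - 1) * (t - 1) * k < n" and "n \<le> (r - 1) * (t - 1) * (k + 1)"
    and "int (min_degree V E) \<ge>
           int n - \<lceil>(real k / real (k + 1)) * real_of_int \<lceil>real n / real (r - 1)\<rceil>\<rceil>"
  shows "arrows V E r t"
proof -
  note r2 = assms(1) and t2 = assms(2) and k1 = assms(3)
  have finV: "finite V" and Eok: "\<forall>e\<in>E. e \<subseteq> V \<and> card e = 2"
    using assms(5) unfolding simple_graph_def by auto
  define m where "m = nat \<lceil>real n / real (r - 1)\<rceil>"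
  note ar = arith_setup[OF assms(1-4) assms(7) assms(8) m_def]
  define j where "j = m div (k + 1)"
  define d where "d = m - j"
  have jm: "j < m" "t - 2 \<le> j" "1 \<le> j" using ar unfolding j_def by auto
  have dm: "1 \<le> d" "d \<le> m" "m = d + j" using jm unfolding d_def by auto
  have m2: "2 \<le> m" using ar by simp
  have mn: "m \<le> n" using ar by simp
  have mindeg: "int (min_degree V E) \<ge> int n - int d"
    using assms(9) ar(9) unfolding d_def j_def by simp
  have Vne: "V \<noteq> {}" using assms(6) assms(7) by auto
  have nn: "card {u\<in>V. u \<noteq> v \<and> {v, u} \<notin> E} \<le> d - 1" if v: "v \<in> V" for v
  proof -
    have Dsub: "{u. {v, u} \<in> E} \<subseteq> V - {v}"
    proof
      fix u assume "u \<in> {u. {v, u} \<in> E}"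
      hence "{v, u} \<subseteq> V" "card {v, u} = 2" using Eok by auto
      thus "u \<in> V - {v}" by (cases "u = v") auto
    qed
    have eq: "{u\<in>V. u \<noteq> v \<and> {v, u} \<notin> E} = (V - {v}) - {u. {v, u} \<in> E}" by auto
    have fD: "finite {u. {v, u} \<in> E}" using Dsub finV finite_subset by blast
    have "card {u\<in>V. u \<noteq> v \<and> {v, u} \<notin> E} = card (V - {v}) - card {u. {v, u} \<in> E}"
      unfolding eq using Dsub fD by (simp add: card_Diff_subset)
    also have "\<dots> = (n - 1) - degree E v" using v finV assms(6) unfolding degree_def by simp
    finally have c: "card {u\<in>V. u \<noteq> v \<and> {v, u} \<notin> E} = (n - 1) - degree E v" .
    have "min_degree V E \<le> degree E v" unfolding min_degree_def using v finV by simp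
    hence "int n - int d \<le> int (degree E v)" using mindeg by linarith
    thus ?thesis using c dm mn by linarith
  qed
  show ?thesis unfolding arrows_def
  proof (intro allI)
    fix c :: "'a set \<Rightarrow> bool"
    show "has_red_clique V E c r \<or> has_blue_path V E c t"
    proof (rule disjCI)
      assume nbp: "\<not> has_blue_path V E c t"
      define adjB where "adjB u v \<longleftrightarrow> {u, v} \<in> E \<and> \<not> c {u, v}" for u v
      define adjH where "adjH u v \<longleftrightarrow> u \<noteq> v \<and> \<not> ({u, v} \<in> E \<and> c {u, v})" for u v
      have irrE: "{u} \<notin> E" for u using Eok by force
      have symB: "adjB u v = adjB v u" for u v unfolding adjB_def by (simp add: insert_commute)
      have symH: "adjH u v = adjH v u" for u v unfolding adjH_def by (auto simp: insert_commute)
      have siB: "symirr adjB" unfolding symirr_def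
      proof (intro conjI allI impI)
        fix u v assume "adjB u v" thus "adjB v u" using symB[of u v] by simp
      next
        fix u show "\<not> adjB u u" using irrE[of u] unfolding adjB_def by simp
      qed
      have siH: "symirr adjH" unfolding symirr_def
      proof (intro conjI allI impI)
        fix u v assume "adjH u v" thus "adjH v u" using symH[of u v] by simp
      next
        fix u show "\<not> adjH u u" unfolding adjH_def by simp
      qed
      have BH: "adjB u v \<Longrightarrow> adjH u v" for u v
        using irrE[of u] unfolding adjB_def adjH_def by (cases "u = v") auto
      have key: "\<exists>I\<subseteq>W. (\<forall>x\<in>I. \<forall>y\<in>I. \<not> adjH x y) \<and> card W \<le> (m - 1) * card I" if "W \<subseteq> V" for W
        using that
      proof (induction "card W" arbitrary: W rule: less_induct)
        case less
        have finW: "finite W" using finite_subset[OF less.prems finV] .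
        have IH: "\<exists>I\<subseteq>W'. (\<forall>x\<in>I. \<forall>y\<in>I. \<not> adjH x y) \<and> card W' \<le> (m - 1) * card I"
          if "W' \<subseteq> W" "card W' < card W" for W'
          using less.hyps[OF that(2) subset_trans[OF that(1) less.prems]] .
        have irrH: "\<not> adjH u u" for u unfolding adjH_def by simp
        have step: "\<exists>I\<subseteq>W. (\<forall>x\<in>I. \<forall>y\<in>I. \<not> adjH x y) \<and>
            card W + (m - 1) \<le> (m - 1) * card I + card (insert v (nbrs adjH W v))" if v: "v \<in> W" for v
        proof -
          define N where "N = insert v (nbrs adjH W v)"
          have NW: "N \<subseteq> W" using v unfolding N_def nbrs_def by auto
          have c1: "card (W - N) < card W" using NW finW v unfolding N_def by (intro psubset_card_mono) auto
          obtain I' where I': "I' \<subseteq> W - N" "\<forall>x\<in>I'. \<forall>y\<in>I'. \<not> adjH x y" "card (W - N) \<le> (m - 1) * card I'"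
            using IH[OF _ c1] by auto
          have vI: "v \<notin> I'" using I' unfolding N_def by auto
          have finI: "finite I'" using I'(1) finW finite_subset by auto
          have ind: "\<forall>x\<in>insert v I'. \<forall>y\<in>insert v I'. \<not> adjH x y"
          proof (intro ballI)
            fix x y assume x: "x \<in> insert v I'" and y: "y \<in> insert v I'"
            have a1: "\<not> adjH v z" if "z \<in> I'" for z
            proof
              assume "adjH v z"
              hence "z \<in> N" using that I'(1) unfolding N_def nbrs_def by auto
              thus False using that I'(1) by auto
            qed
            show "\<not> adjH x y"
            proof (cases "x = v")
              case True
              thus ?thesis using y a1 irrH by auto
            next
              case False
              hence xI: "x \<in> I'" using x by simp
              show ?thesis
              proof (cases "y = v")
                case True thus ?thesis using a1[OF xI] symH[of x v] by simp
              next
                case False thus ?thesis using xI y I'(2) by auto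
              qed
            qed
          qed
          have "card W = card (W - N) + card N"
            using card_Diff_subset[OF finite_subset[OF NW finW] NW] card_mono[OF finW NW] by linarith
          hence "card W + (m - 1) \<le> (m - 1) * card (insert v I') + card N" using I'(3) vI finI by simp
          thus ?thesis using ind I'(1) v unfolding N_def by (intro exI[of _ "insert v I'"]) auto
        qed
        show ?case
        proof (cases "W = {}")
          case True thus ?thesis by simp
        next
          case Wne: False
          show ?thesis
          proof (cases "\<exists>v\<in>W. card (nbrs adjH W v) \<le> m - 2")
            case True
            then obtain v where v: "v \<in> W" "card (nbrs adjH W v) \<le> m - 2" by blast
            obtain I where I: "I \<subseteq> W" "\<forall>x\<in>I. \<forall>y\<in>I. \<not> adjH x y"
              "card W + (m - 1) \<le> (m - 1) * card I + card (insert v (nbrs adjH W v))"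
              using step[OF v(1)] by blast
            have "card (insert v (nbrs adjH W v)) \<le> Suc (card (nbrs adjH W v))"
              using finite_nbrs[OF finW] by (simp add: card_insert_if)
            hence "card W \<le> (m - 1) * card I" using I(3) v(2) m2 by linarith
            thus ?thesis using I by blast
          next
            case False
            hence hi: "m - 1 \<le> card (nbrs adjH W v)" if "v \<in> W" for v using that m2 by force
            have WV: "W \<subseteq> V" by (rule less.prems)
            have Hle: "card (nbrs adjH W v) \<le> card (nbrs adjB W v) + (d - 1)" if v: "v \<in> W" for v
            proof -
              have "nbrs adjH W v \<subseteq> nbrs adjB W v \<union> {u\<in>V. u \<noteq> v \<and> {v, u} \<notin> E}"
                using WV unfolding nbrs_def adjH_def adjB_def by auto
              hence "card (nbrs adjH W v) \<le> card (nbrs adjB W v \<union> {u\<in>V. u \<noteq> v \<and> {v, u} \<notin> E})"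
                using finV finW by (intro card_mono) (auto simp: finite_nbrs)
              also have "\<dots> \<le> card (nbrs adjB W v) + card {u\<in>V. u \<noteq> v \<and> {v, u} \<notin> E}" by (rule card_Un_le)
              also have "\<dots> \<le> card (nbrs adjB W v) + (d - 1)" using nn[of v] v WV by auto
              finally show ?thesis .
            qed
            have degB: "\<forall>v\<in>W. t - 2 \<le> card (nbrs adjB W v)"
            proof
              fix v assume v: "v \<in> W"
              show "t - 2 \<le> card (nbrs adjB W v)" using hi[OF v] Hle[OF v] dm jm by linarith
            qed
            have nop: "\<not> (\<exists>ps. length ps = t \<and> distinct ps \<and> set ps \<subseteq> W \<and> walk adjB ps)"
            proof
              assume "\<exists>ps. length ps = t \<and> distinct ps \<and> set ps \<subseteq> W \<and> walk adjB ps"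
              then obtain ps where ps: "length ps = t" "distinct ps" "set ps \<subseteq> W" "walk adjB ps" by blast
              have "has_blue_path V E c t" unfolding has_blue_path_def
              proof (intro exI[of _ ps] conjI allI impI)
                show "length ps = t" "distinct ps" by (rule ps(1), rule ps(2))
                show "set ps \<subseteq> V" using ps(3) WV by auto
                fix i assume "Suc i < t"
                hence "adjB (ps ! i) (ps ! Suc i)" using nth_of_walk[OF ps(4)] ps(1) by simp
                thus "{ps ! i, ps ! Suc i} \<in> E" "\<not> c {ps ! i, ps ! Suc i}" unfolding adjB_def by auto
              qed
              thus False using nbp by simp
            qed
            have PB: "card (nbrs adjB W v) = t - 2 \<and> clq adjB (nbrs adjB W v)" if v: "v \<in> W" for v
              by (rule path_block[OF finW siB t2 degB nop v])
            obtain v0 where v0: "v0 \<in> W" using Wne by blast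
            have jt: "j \<le> t - 2" using hi[OF v0] Hle[OF v0] PB[OF v0] dm jm by linarith
            have bad: "\<not> (t - 1) dvd m" "3 \<le> t" "3 \<le> m" "m = 3 \<longrightarrow> t = 3"
              using ar(10) jt unfolding j_def by auto
            have regH: "card (nbrs adjH W v) = m - 1" if v: "v \<in> W" for v
              using hi[OF v] Hle[OF v] PB[OF v] dm jm jt by linarith
            define blk where "blk v = insert v (nbrs adjB W v)" for v
            have blkP: "\<forall>v\<in>W. blk v \<subseteq> W \<and> v \<in> blk v \<and> card (blk v) = t - 1"
            proof
              fix v assume v: "v \<in> W"
              have "v \<notin> nbrs adjB W v" using symirr_irr[OF siB] unfolding nbrs_def by auto
              hence "card (blk v) = Suc (t - 2)" using PB[OF v] finite_nbrs[OF finW] unfolding blk_def by simp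
              thus "blk v \<subseteq> W \<and> v \<in> blk v \<and> card (blk v) = t - 1"
                using v bad(2) unfolding blk_def nbrs_def by auto
            qed
            have blkE: "\<forall>u\<in>W. \<forall>v\<in>blk u. blk v = blk u"
            proof (intro ballI)
              fix u v assume u: "u \<in> W" and v: "v \<in> blk u"
              have vW: "v \<in> W" using blkP u v by blast
              have sub: "blk u \<subseteq> blk v"
              proof
                fix w assume w: "w \<in> blk u"
                have wW: "w \<in> W" using blkP u w by blast
                show "w \<in> blk v"
                proof (cases "w = v")
                  case True thus ?thesis unfolding blk_def by simp
                next
                  case wv: False
                  show ?thesis
                  proof (cases "v = u")
                    case True thus ?thesis using w by simp
                  next
                    case vu: False
                    hence vn: "adjB u v" using v unfolding blk_def nbrs_def by auto
                    show ?thesis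
                    proof (cases "w = u")
                      case True
                      hence "adjB v w" using vn symB[of u v] by simp
                      thus ?thesis using wW unfolding blk_def nbrs_def by simp
                    next
                      case False
                      hence wnb: "w \<in> nbrs adjB W u" using w unfolding blk_def by simp
                      have vnb: "v \<in> nbrs adjB W u" using vn vW unfolding nbrs_def by simp
                      have cl: "clq adjB (nbrs adjB W u)" using PB[OF u] by simp
                      have "v \<noteq> w" using wv by simp
                      hence "adjB v w" using cl vnb wnb unfolding clq_def by simp
                      thus ?thesis using wW unfolding blk_def nbrs_def by simp
                    qed
                  qed
                qed
              qed
              have "finite (blk v)" using blkP vW finW finite_subset by meson
              moreover have "card (blk v) \<le> card (blk u)" using blkP u vW by simp
              ultimately show "blk v = blk u" using sub sub_card_eq by blast
            qed
            have noclq: "\<not> (\<exists>X\<subseteq>W. card X = Suc (m - 1) \<and> clq adjH X)"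
            proof
              assume "\<exists>X\<subseteq>W. card X = Suc (m - 1) \<and> clq adjH X"
              then obtain X where X: "X \<subseteq> W" "card X = m" "clq adjH X" using m2 by auto
              have finX: "finite X" using X(1) finW finite_subset by auto
              have XB: "\<forall>v\<in>X. blk v \<subseteq> X \<and> v \<in> blk v \<and> card (blk v) = t - 1"
              proof
                fix v assume v: "v \<in> X"
                have vW: "v \<in> W" using v X by auto
                have s1: "X \<subseteq> insert v (nbrs adjH W v)"
                  using X v unfolding clq_def nbrs_def by auto
                have "v \<notin> nbrs adjH W v" unfolding nbrs_def adjH_def by simp
                hence "card (insert v (nbrs adjH W v)) = m"
                  using regH[OF vW] finite_nbrs[OF finW] m2 by simp
                hence Xeq: "X = insert v (nbrs adjH W v)"
                  using s1 X(2) finite_nbrs[OF finW] by (intro sub_card_eq) auto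
                have "blk v \<subseteq> insert v (nbrs adjH W v)" using BH unfolding blk_def nbrs_def by auto
                thus "blk v \<subseteq> X \<and> v \<in> blk v \<and> card (blk v) = t - 1" using Xeq blkP vW by auto
              qed
              have "(t - 1) dvd card X"
                by (rule block_dvd[OF finX XB]) (use blkE X(1) in blast)
              thus False using X(2) bad(1) by simp
            qed
            show ?thesis
            proof (cases "3 \<le> m - 1")
              case True
              have "colourable adjH W (m - 1)"
                by (rule brooks[OF True finW siH _ noclq]) (use regH in simp)
              then obtain f where f: "\<forall>v\<in>W. f v < m - 1" "pcol adjH W f" unfolding colourable_def by blast
              obtain c0 where c0: "c0 < m - 1" "card W \<le> (m - 1) * card {v\<in>W. f v = c0}"
                using pigeon[OF finW _ f(1)] True by (metis less_le_trans zero_less_numeral)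
              have ni: "\<not> adjH x y" if "x \<in> W" "y \<in> W" "f x = f y" for x y
                using f(2) that unfolding pcol_def by blast
              have "\<forall>x\<in>{v\<in>W. f v = c0}. \<forall>y\<in>{v\<in>W. f v = c0}. \<not> adjH x y"
                using ni by simp
              thus ?thesis using c0 by (intro exI[of _ "{v\<in>W. f v = c0}"]) auto
            next
              case False
              hence m3: "m = 3" using bad(3) by simp
              hence t3: "t = 3" using bad(4) by simp
              have ev: "2 dvd card W" using block_dvd[OF finW blkP blkE] t3 by simp
              obtain I where I: "I \<subseteq> W" "\<forall>x\<in>I. \<forall>y\<in>I. \<not> adjH x y"
                "card W + (m - 1) \<le> (m - 1) * card I + card (insert v0 (nbrs adjH W v0))"
                using step[OF v0] by blast
              have "v0 \<notin> nbrs adjH W v0" unfolding nbrs_def adjH_def by simp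
              hence "card (insert v0 (nbrs adjH W v0)) = 3"
                using regH[OF v0] finite_nbrs[OF finW] m3 by simp
              hence "card W + 2 \<le> 2 * card I + 3" using I(3) m3 by simp
              hence "card W \<le> 2 * card I" using ev by presburger
              thus ?thesis using I m3 by auto
            qed
          qed
        qed
      qed
      obtain I where I: "I \<subseteq> V" "\<forall>x\<in>I. \<forall>y\<in>I. \<not> adjH x y" "n \<le> (m - 1) * card I"
        using key[of V] assms(6) by auto
      have "r \<le> card I"
      proof (rule ccontr)
        assume "\<not> r \<le> card I"
        hence "card I \<le> r - 1" by simp
        hence "(m - 1) * card I \<le> (m - 1) * (r - 1)" by (rule mult_le_mono2)
        thus False using I(3) ar(1) mult.commute[of "r - 1" "m - 1"] by linarith
      qed
      then obtain S where S: "S \<subseteq> I" "card S = r" by (meson obtain_subset_with_card_n)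
      show "has_red_clique V E c r" unfolding has_red_clique_def
      proof (intro exI[of _ S] conjI)
        show "S \<subseteq> V" using S I by auto
        show "card S = r" by (rule S(2))
        show "\<forall>x\<in>S. \<forall>y\<in>S. x \<noteq> y \<longrightarrow> {x, y} \<in> E \<and> c {x, y}"
          using S I(2) unfolding adjH_def by blast
      qed
    qed
  qed
qed

end
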